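(* Let $d\ge1$, $\emptyset\ne H\subset\mathbb{R}^d$, $R>0$, and let $x,y\in\mathbb{R}^d$ with $d(x,H)\ge R$ and $d(y,H)\ge R$. Then for every $0\le\Delta\le R$, $$d(T_\Delta x,T_\Delta y)\ge\frac{R-\Delta}{R}\,d(x,y).$$
   Context: $d(\cdot,\cdot)$ is Euclidean distance and $d(x,H)=\inf_{z\in H}|x-z|$. Let $\bar H$ be the closure of $H$; for each $x$ let $\pi(x)\in\bar H$ be a point with $|x-\pi(x)|=d(x,H)$ (any one if several). For $\Delta\ge0$, $T_\Delta x:=x+\Delta\frac{\pi(x)-x}{|\pi(x)-x|}$ if $d(x,H)>\Delta$ and $T_\Delta x:=\pi(x)$ if $d(x,H)\le\Delta$. *)

theory Defs
  imports "HOL-Analysis.Analysis"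
begin

definition is_nearest_point_map :: "'a::euclidean_space set \<Rightarrow> ('a \<Rightarrow> 'a) \<Rightarrow> bool" where
  "is_nearest_point_map H proj \<longleftrightarrow>
     (\<forall>x. proj x \<in> closure H \<and> dist x (proj x) = infdist x H)"

definition T_step :: "'a::euclidean_space set \<Rightarrow> ('a \<Rightarrow> 'a) \<Rightarrow> real \<Rightarrow> 'a \<Rightarrow> 'a" where
  "T_step H proj \<Delta> x =
     (if infdist x H > \<Delta>
      then x + \<Delta> *\<^sub>R ((proj x - x) /\<^sub>R norm (proj x - x))
      else proj x)"

end

theory Submission
  imports Defs
begin

lemma inner_bound:
  fixes w u v :: "'a::real_inner"
  assumes u: "norm u = 1" and v: "norm v = 1" and R: "R > 0" and a: "a \<ge> R" and b: "b \<ge> R"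
    and c1: "norm (w - b *\<^sub>R v) \<ge> a" and c2: "norm (w + a *\<^sub>R u) \<ge> b"
  shows "inner w (u - v) \<ge> - ((norm w)^2) / R"
proof -
  define W where "W = norm w"
  define al where "al = inner w u"
  define be where "be = inner w v"
  have uu: "inner u u = 1" using u by (simp add: power2_norm_eq_inner[symmetric])
  have vv: "inner v v = 1" using v by (simp add: power2_norm_eq_inner[symmetric])
  have ww: "inner w w = W^2" unfolding W_def by (simp add: power2_norm_eq_inner)
  have e1: "(norm (w - b *\<^sub>R v))^2 = W^2 - 2*b*be + b^2"
    unfolding power2_norm_eq_inner be_def
    by (simp add: inner_diff_left inner_diff_right ww vv inner_commute[of v w] algebra_simps power2_eq_square)
  have e2: "(norm (w + a *\<^sub>R u))^2 = W^2 + 2*a*al + a^2"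
    unfolding power2_norm_eq_inner al_def
    by (simp add: inner_add_left inner_add_right ww uu inner_commute[of u w] algebra_simps power2_eq_square)
  have "a^2 \<le> (norm (w - b *\<^sub>R v))^2" by (rule power_mono) (use c1 R a in auto)
  hence h1: "2*b*be \<le> W^2 + b^2 - a^2" using e1 by simp
  have "b^2 \<le> (norm (w + a *\<^sub>R u))^2" by (rule power_mono) (use c2 R b in auto)
  hence h2: "2*a*al \<ge> b^2 - a^2 - W^2" using e2 by simp
  have apos: "a > 0" and bpos: "b > 0" using a b R by auto
  have "2*a*b*(al - be) \<ge> b*(b^2 - a^2 - W^2) - a*(W^2 + b^2 - a^2)"
  proof -
    have "b*(2*a*al) \<ge> b*(b^2 - a^2 - W^2)" by (rule mult_left_mono) (use h2 bpos in auto)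
    moreover have "a*(2*b*be) \<le> a*(W^2 + b^2 - a^2)" by (rule mult_left_mono) (use h1 apos in auto)
    ultimately show ?thesis by (simp add: algebra_simps)
  qed
  moreover have "b*(b^2 - a^2 - W^2) - a*(W^2 + b^2 - a^2) = (b-a)^2*(b+a) - (W^2*(a+b))"
    by (simp add: algebra_simps power2_eq_square)
  moreover have "(b-a)^2*(b+a) \<ge> 0" using apos bpos by simp
  ultimately have "2*a*b*(al - be) \<ge> - (W^2*(a+b))" by linarith
  moreover have "W^2*(a+b)*R \<le> W^2 * (2*a*b)"
  proof -
    have "(a+b)*R \<le> 2*a*b"
    proof -
      have "a*R \<le> a*b" by (rule mult_left_mono) (use apos b in auto)
      moreover have "b*R \<le> b*a" by (rule mult_left_mono) (use bpos a in auto)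
      ultimately show ?thesis by (simp add: algebra_simps)
    qed
    from mult_left_mono[OF this, of "W^2"] show ?thesis by (simp add: mult.assoc)
  qed
  ultimately have "2*a*b*(al - be) * R \<ge> - (W^2 * (2*a*b))"
  proof -
    assume A: "- (W^2*(a+b)) \<le> 2*a*b*(al - be)" and B: "W^2*(a+b)*R \<le> W^2 * (2*a*b)"
    have "- (W^2*(a+b)) * R \<le> 2*a*b*(al - be) * R" by (rule mult_right_mono) (use A R in auto)
    moreover have "- (W^2*(a+b)) * R = - (W^2*(a+b)*R)" by (simp only: mult_minus_left)
    ultimately show ?thesis using B by linarith
  qed
  moreover have "2*a*b*(al - be) * R = (2*a*b) * ((al - be) * R)" by simp
  moreover have "- (W^2 * (2*a*b)) = (2*a*b) * (- (W^2))" by simp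
  ultimately have "(2*a*b) * (- (W^2)) \<le> (2*a*b) * ((al - be) * R)" by linarith
  moreover have "2*a*b > 0" using apos bpos by simp
  ultimately have "(al - be) * R \<ge> - (W^2)" by (rule mult_left_le_imp_le)
  hence "(- (W^2)) / R \<le> al - be" by (subst pos_divide_le_eq[OF R])
  hence "al - be \<ge> - (W^2) / R" by (simp only: minus_divide_left)
  thus ?thesis unfolding al_def be_def W_def by (simp add: inner_diff_right)
qed

lemma final_bound:
  fixes w z :: "'a::real_inner"
  assumes R: "R > 0" and D: "0 \<le> \<Delta>" "\<Delta> \<le> R"
    and ib: "inner w z \<ge> - ((norm w)^2) / R"
  shows "norm (w + \<Delta> *\<^sub>R z) \<ge> (R - \<Delta>) / R * norm w"
proof -
  define W where "W = norm w"
  define t where "t = norm z"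
  define k where "k = (R - \<Delta>) / R"
  have k0: "0 \<le> k" and k1: "k \<le> 1" using R D by (auto simp: k_def)
  have kk: "1 - k = \<Delta> / R" using R by (simp add: k_def field_simps)
  have W0: "W \<ge> 0" and t0: "t \<ge> 0" by (auto simp: W_def t_def)
  have cs: "inner w z \<ge> - (W * t)"
    using Cauchy_Schwarz_ineq2[of w z] abs_le_iff unfolding W_def t_def by fastforce
  have ib': "inner w z * R \<ge> - (W^2)"
  proof -
    have "- ((norm w)^2 / R) * R \<le> inner w z * R" by (rule mult_right_mono) (use ib R in auto)
    thus ?thesis using R unfolding W_def by simp
  qed
  obtain i where iw: "inner w z = i" by simp
  have sq: "(norm (w + \<Delta> *\<^sub>R z))^2 = W^2 + 2*\<Delta>*inner w z + \<Delta>^2*t^2"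
    unfolding power2_norm_eq_inner W_def t_def
    by (simp add: inner_add_left inner_add_right inner_commute[of z w] power2_eq_square algebra_simps)
  have "(k*W)^2 \<le> W^2 + 2*\<Delta>*i + \<Delta>^2*t^2"
  proof (cases "t * R \<le> W")
    case True
    have "t \<le> W / R" using True R by (simp add: le_divide_eq)
    hence "\<Delta> * t \<le> \<Delta> * (W / R)" by (rule mult_left_mono) (use D in auto)
    moreover have "k*W = W - \<Delta> * (W / R)" using R by (simp add: k_def diff_divide_distrib left_diff_distrib)
    ultimately have "k * W \<le> W - \<Delta> * t" by linarith
    moreover have "0 \<le> k*W" using k0 W0 by simp
    ultimately have "(k*W)^2 \<le> (W - \<Delta>*t)^2" by (rule power_mono)
    also have "\<dots> = W^2 - 2*\<Delta>*(W*t) + \<Delta>^2*t^2" by (simp add: power2_eq_square algebra_simps)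
    also have "\<dots> \<le> W^2 + 2*\<Delta>*i + \<Delta>^2*t^2" 
    proof -
      have "\<Delta> * (- (W*t)) \<le> \<Delta> * i" by (rule mult_left_mono) (use cs iw D in auto)
      thus ?thesis by (simp add: algebra_simps)
    qed
    finally show ?thesis .
  next
    case False
    hence "W \<le> t * R" by simp
    hence "W^2 \<le> (t*R)^2" by (rule power_mono) (use W0 in auto)
    from mult_left_mono[OF this, of "\<Delta>^2"] have h: "\<Delta>^2 * W^2 \<le> \<Delta>^2 * t^2 * R^2"
      by (simp add: power_mult_distrib mult.assoc)
    have h2: "2*\<Delta>*(i * R) \<ge> 2*\<Delta>*(- (W^2))" by (rule mult_left_mono) (use ib' iw D in auto)
    have kWR: "k*W*R = (R-\<Delta>)*W" using R unfolding k_def by simp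
    have "(k*W)^2 * R^2 = (k*W*R)^2" by (simp only: power_mult_distrib)
    also have "\<dots> = ((R-\<Delta>)*W)^2" by (simp only: kWR)
    also have "\<dots> = W^2*R^2 - 2*\<Delta>*R*W^2 + \<Delta>^2*W^2" by (simp add: power2_eq_square algebra_simps)
    also have "\<dots> \<le> W^2*R^2 + 2*\<Delta>*(i * R)*R + \<Delta>^2 * t^2 * R^2"
    proof -
      have "2*\<Delta>*(i * R)*R \<ge> 2*\<Delta>*(- (W^2))*R" by (rule mult_right_mono[OF h2]) (insert R, linarith)
      moreover have "2*\<Delta>*(- (W^2))*R = - (2*\<Delta>*R*W^2)" by simp
      ultimately show ?thesis using h by linarith
    qed
    also have "\<dots> = (W^2 + 2*\<Delta>*i + \<Delta>^2*t^2) * R^2" by (simp add: power2_eq_square algebra_simps)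
    finally have "(k*W)^2 * R^2 \<le> (W^2 + 2*\<Delta>*i + \<Delta>^2*t^2) * R^2" .
    moreover have "R^2 > 0" using R by simp
    ultimately show ?thesis by (rule mult_right_le_imp_le)
  qed
  hence "(k*W)^2 \<le> (norm (w + \<Delta> *\<^sub>R z))^2" using sq iw by simp
  hence "k*W \<le> norm (w + \<Delta> *\<^sub>R z)" by (rule power2_le_imp_le) simp
  thus ?thesis by (simp add: k_def W_def)
qed

lemma dist_closure_ge:
  assumes "H \<noteq> {}" "h \<in> closure H"
  shows "infdist x H \<le> dist x h"
proof -
  have "infdist h H = 0" using assms in_closure_iff_infdist_zero by blast
  thus ?thesis using infdist_triangle[of x H h] by simp
qed

theorem proposition1:
  fixes H :: "'a::euclidean_space set" and proj :: "'a \<Rightarrow> 'a"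
    and x y :: 'a and R \<Delta> :: real
  assumes "H \<noteq> {}"
    and "is_nearest_point_map H proj"
    and "R > 0"
    and "infdist x H \<ge> R" and "infdist y H \<ge> R"
    and "0 \<le> \<Delta>" and "\<Delta> \<le> R"
  shows "dist (T_step H proj \<Delta> x) (T_step H proj \<Delta> y) \<ge> (R - \<Delta>) / R * dist x y"
proof (cases "\<Delta> = R")
  case True
  thus ?thesis by simp
next
  case False
  hence DR: "\<Delta> < R" using assms by simp
  define p where "p = proj x"
  define q where "q = proj y"
  define a where "a = infdist x H"
  define b where "b = infdist y H"
  have pc: "p \<in> closure H" and pa: "dist x p = a" using assms(2) unfolding p_def a_def is_nearest_point_map_def by auto
  have qc: "q \<in> closure H" and qb: "dist y q = b" using assms(2) unfolding q_def b_def is_nearest_point_map_def by auto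
  have aR: "a \<ge> R" and bR: "b \<ge> R" using assms unfolding a_def b_def by auto
  have apos: "a > 0" and bpos: "b > 0" using aR bR assms by auto
  define u where "u = (p - x) /\<^sub>R a"
  define v where "v = (q - y) /\<^sub>R b"
  have na: "norm (p - x) = a" using pa by (simp add: dist_norm norm_minus_commute)
  have nb: "norm (q - y) = b" using qb by (simp add: dist_norm norm_minus_commute)
  have nu: "norm u = 1" using na apos by (simp add: u_def)
  have nv: "norm v = 1" using nb bpos by (simp add: v_def)
  have pu: "p = x + a *\<^sub>R u" using apos by (simp add: u_def)
  have qv: "q = y + b *\<^sub>R v" using bpos by (simp add: v_def)
  have Tx: "T_step H proj \<Delta> x = x + \<Delta> *\<^sub>R u"
    using DR aR na unfolding T_step_def a_def[symmetric] p_def[symmetric] u_def by simp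
  have Ty: "T_step H proj \<Delta> y = y + \<Delta> *\<^sub>R v"
    using DR bR nb unfolding T_step_def b_def[symmetric] q_def[symmetric] v_def by simp
  define w where "w = x - y"
  have c1: "norm (w - b *\<^sub>R v) \<ge> a"
  proof -
    have "a \<le> dist x q" using dist_closure_ge[OF assms(1) qc] a_def by simp
    thus ?thesis by (simp add: dist_norm w_def qv algebra_simps)
  qed
  have c2: "norm (w + a *\<^sub>R u) \<ge> b"
  proof -
    have "b \<le> dist y p" using dist_closure_ge[OF assms(1) pc] b_def by simp
    hence "b \<le> norm (y - p)" by (simp add: dist_norm)
    also have "y - p = - (w + a *\<^sub>R u)" by (simp add: w_def pu algebra_simps)
    finally show ?thesis by (metis norm_minus_cancel)
  qed
  have ib: "inner w (u - v) \<ge> - ((norm w)^2) / R"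
    by (rule inner_bound[OF nu nv assms(3) aR bR c1 c2])
  have "norm (w + \<Delta> *\<^sub>R (u - v)) \<ge> (R - \<Delta>) / R * norm w"
    by (rule final_bound[OF assms(3) assms(6) assms(7) ib])
  moreover have "T_step H proj \<Delta> x - T_step H proj \<Delta> y = w + \<Delta> *\<^sub>R (u - v)"
    by (simp add: Tx Ty w_def algebra_simps)
  ultimately show ?thesis by (simp add: dist_norm w_def)
qed

end
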